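(* Let $d\ge2$, $b\ge1$ be integers and $\gamma,\nu>0$. Consider the $(d+1)\times(d+1)$ matrix $A^Q$ indexed by $0,1,\dots,d$ with $A^Q_{j,j}=-\nu$ for all $j$, $A^Q_{k,k-1}=\gamma$ for $1\le k\le d-1$, $A^Q_{d,d-1}=b\gamma$, and all other entries $0$; let $B^Q=\mathbf{e}_0$, and let $W(t)$ solve $\dot W=A^QW+W(A^Q)^T+B^Q(B^Q)^T$, $W(0)=0$. Let $V_{j,k}(s)$ denote the Laplace transform of $W_{j,k}(t)$. Then (i) for $0\le j,k\le d-1$: $V_{j,k}(s)=\dfrac{1}{s(s+2\nu)}\left(\dfrac{\gamma}{s+2\nu}\right)^{j+k}\dbinom{j+k}{k}$, equivalently $W_{j,k}(t)=\dfrac{1}{2\nu}\left(\dfrac{\gamma}{2\nu}\right)^{j+k}\dbinom{j+k}{k}\left[1-e^{-2\nu t}\sum_{\ell=0}^{j+k}\dfrac{(2\nu t)^\ell}{\ell!}\right]$; (ii) for $0\le j\le d-1$: $V_{d,j}(s)=V_{j,d}(s)=\dfrac{b}{s(s+2\nu)}\left(\dfrac{\gamma}{s+2\nu}\right)^{d+j}\dbinom{d+j}{d}$; (iii) $V_{d,d}(s)=\dfrac{b^2}{s(s+2\nu)}\left(\dfrac{\gamma}{s+2\nu}\right)^{2d}\dbinom{2d}{d}$.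
   Context: $A^Q$ is the adjacency matrix of a weighted directed path $0\to1\to\cdots\to d$ with uniform self-loop weight $-\nu$, all edge weights $\gamma$ except the last edge $(d-1)\to d$ which has weight $b\gamma$ (this is the quotient of the directed balloon graph). $\mathbf{e}_0$ is the standard basis vector for index $0$. The Laplace transform is $V(s)=\int_0^\infty e^{-st}W(t)\,dt$. *)

theory Defs
  imports "HOL-Analysis.Analysis"
begin

definition AQ :: "nat \<Rightarrow> nat \<Rightarrow> real \<Rightarrow> real \<Rightarrow> nat \<Rightarrow> nat \<Rightarrow> real" where
  "AQ d b \<gamma> \<nu> j k =
     (if j > d \<or> k > d then 0
      else if j = k then - \<nu>
      else if 1 \<le> j \<and> j \<le> d - 1 \<and> k = j - 1 then \<gamma>
      else if j = d \<and> k = d - 1 then real b * \<gamma>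
      else 0)"

definition BBT :: "nat \<Rightarrow> nat \<Rightarrow> real" where
  "BBT j k = (if j = 0 \<and> k = 0 then 1 else 0)"

definition solves_lyap :: "nat \<Rightarrow> nat \<Rightarrow> real \<Rightarrow> real \<Rightarrow> (real \<Rightarrow> nat \<Rightarrow> nat \<Rightarrow> real) \<Rightarrow> bool" where
  "solves_lyap d b \<gamma> \<nu> W \<longleftrightarrow>
     (\<forall>j\<le>d. \<forall>k\<le>d. W 0 j k = 0) \<and>
     (\<forall>t\<ge>0. \<forall>j\<le>d. \<forall>k\<le>d.
        ((\<lambda>\<tau>. W \<tau> j k) has_real_derivative
           ((\<Sum>l\<le>d. AQ d b \<gamma> \<nu> j l * W t l k) + (\<Sum>l\<le>d. W t j l * AQ d b \<gamma> \<nu> k l) + BBT j k))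
         (at t within {0..}))"

definition laplace_is :: "(real \<Rightarrow> real) \<Rightarrow> complex \<Rightarrow> complex \<Rightarrow> bool" where
  "laplace_is f s V \<longleftrightarrow> ((\<lambda>t. exp (- (s * of_real t)) * of_real (f t)) has_integral V) {0..}"

end

theory Submission
  imports Defs
begin

lemma has_integral_at_top_lim:
  fixes f :: "real \<Rightarrow> 'a::banach"
  assumes der: "\<And>x. x \<ge> a \<Longrightarrow> (F has_vector_derivative f x) (at x)"
    and lim: "(F \<longlongrightarrow> L) at_top"
  shows "(f has_integral (L - F a)) {a..}"
proof -
  have int: "(f has_integral (F y - F a)) {a..y}" if "y \<ge> a" for y
    using that by (intro fundamental_theorem_of_calculus) (auto intro: has_vector_derivative_at_within der)
  have nb: "\<not> (\<exists>a' b'. {a..} = cbox a' (b'::real))"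
  proof
    assume "\<exists>a' b'. {a..} = cbox a' (b'::real)"
    then obtain a' b' where e: "{a..} = cbox a' (b'::real)" by blast
    have "max a b' + 1 \<in> {a..}" by simp
    then show False using e by auto
  qed
  have main: "\<forall>e>0. \<exists>B>0. \<forall>a' b'. ball 0 B \<subseteq> cbox a' b' \<longrightarrow>
      (\<exists>z. ((\<lambda>x. if x \<in> {a..} then f x else 0) has_integral z) (cbox a' b') \<and> norm (z - (L - F a)) < e)"
  proof (intro allI impI)
    fix e :: real assume e: "e > 0"
    from lim e have "\<forall>\<^sub>F y in at_top. dist (F y) L < e" by (rule tendstoD)
    then obtain M where M: "\<And>y. y \<ge> M \<Longrightarrow> dist (F y) L < e" by (auto simp: eventually_at_top_linorder)
    define B where "B = \<bar>a\<bar> + \<bar>M\<bar> + 1"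
    show "\<exists>B>0. \<forall>a' b'. ball 0 B \<subseteq> cbox a' b' \<longrightarrow>
      (\<exists>z. ((\<lambda>x. if x \<in> {a..} then f x else 0) has_integral z) (cbox a' b') \<and> norm (z - (L - F a)) < e)"
    proof (intro exI[of _ B] conjI allI impI)
      show "B > 0" unfolding B_def by simp
      fix a' b' :: real assume sub: "ball 0 B \<subseteq> cbox a' b'"
      have "a' \<le> -(B - 1/2)" "b' \<ge> B - 1/2"
        using subsetD[OF sub, of "-(B - 1/2)"] subsetD[OF sub, of "B - 1/2"]
        by (auto simp: B_def)
      then have ab: "a' \<le> a" "b' \<ge> a" "b' \<ge> M" by (auto simp: B_def)
      have "((\<lambda>x. if x \<in> {a..b'} then f x else 0) has_integral (F b' - F a)) {a'..b'}"
        using int[OF ab(2)] ab by (subst has_integral_restrict) auto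
      then have "((\<lambda>x. if x \<in> {a..} then f x else 0) has_integral (F b' - F a)) (cbox a' b')"
        using has_integral_cong[of "{a'..b'}" "\<lambda>x. if x \<in> {a..b'} then f x else 0" "\<lambda>x. if x \<in> {a..} then f x else 0"] ab
        by (auto simp: cbox_interval)
      moreover have "norm ((F b' - F a) - (L - F a)) < e"
        using M[OF ab(3)] by (simp add: dist_norm)
      ultimately show "\<exists>z. ((\<lambda>x. if x \<in> {a..} then f x else 0) has_integral z) (cbox a' b') \<and> norm (z - (L - F a)) < e"
        by blast
    qed
  qed
  show ?thesis
    by (subst has_integral_alt, simp only: nb if_False) (rule main)
qed

definition rC :: "real \<Rightarrow> complex \<Rightarrow> nat \<Rightarrow> complex \<Rightarrow> complex" where
  "rC a p l z = exp (-(p*z)) * (of_real a * z)^l / fact l"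

fun RC :: "real \<Rightarrow> complex \<Rightarrow> nat \<Rightarrow> complex \<Rightarrow> complex" where
  "RC a p 0 z = - rC a p 0 z / p"
| "RC a p (Suc l) z = (of_real a / p) * RC a p l z - rC a p (Suc l) z / p"

lemma rC_deriv:
  "(rC a p l has_field_derivative
     (if l = 0 then - p * rC a p 0 z else of_real a * rC a p (l-1) z - p * rC a p l z)) (at z)"
proof (cases l)
  case 0
  then show ?thesis unfolding rC_def
    by (auto intro!: derivative_eq_intros)
next
  case (Suc m)
  have "((\<lambda>z. exp (-(p*z)) * (of_real a * z)^Suc m / fact (Suc m)) has_field_derivative
     (exp (-(p*z)) * (- p) * (of_real a * z)^Suc m / fact (Suc m)
      + exp (-(p*z)) * (of_nat (Suc m) * (of_real a * z)^m * of_real a) / fact (Suc m))) (at z)"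
    apply (rule derivative_eq_intros refl)+
    apply (simp_all del: fact_Suc add: field_simps)
    done
  moreover have "exp (-(p*z)) * (- p) * (of_real a * z)^Suc m / fact (Suc m)
      + exp (-(p*z)) * (of_nat (Suc m) * (of_real a * z)^m * of_real a) / fact (Suc m)
     = of_real a * rC a p m z - p * rC a p (Suc m) z"
  proof -
    define c where "c = (1 + of_nat m :: complex)"
    have e1: "(fact (Suc m)::complex) = c * fact m" "(of_nat (Suc m)::complex) = c" by (simp_all add: c_def)
    have e2: "c \<noteq> 0" unfolding c_def
      by (metis of_nat_Suc of_nat_eq_0_iff nat.distinct(1))
    have e3: "(fact m :: complex) \<noteq> 0" by simp
    show ?thesis unfolding rC_def e1 using e2 e3 by (simp add: field_simps)
  qed
  ultimately show ?thesis using Suc unfolding rC_def by simp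
qed

lemma RC_deriv:
  assumes "p \<noteq> 0"
  shows "(RC a p l has_field_derivative rC a p l z) (at z)"
proof (induction l)
  case 0
  show ?case using rC_deriv[of a p 0 z] assms
    by (auto intro!: derivative_eq_intros)
next
  case (Suc l)
  have "((\<lambda>z. (of_real a / p) * RC a p l z - rC a p (Suc l) z / p) has_field_derivative
     (of_real a / p) * rC a p l z - (of_real a * rC a p l z - p * rC a p (Suc l) z) / p) (at z)"
    using Suc rC_deriv[of a p "Suc l" z] assms
    by (auto intro!: derivative_eq_intros)
  moreover have "(of_real a / p) * rC a p l z - (of_real a * rC a p l z - p * rC a p (Suc l) z) / p
     = rC a p (Suc l) z" using assms by (simp add: field_simps)
  ultimately show ?case by simp
qed

lemma RC_0: "RC a p l 0 = - ((of_real a / p)^l / p)"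
  by (induction l) (auto simp: rC_def)

lemma pow_exp_lim:
  assumes "c > 0"
  shows "((\<lambda>t::real. t^l * exp (-c*t)) \<longlongrightarrow> 0) at_top"
proof -
  have "((\<lambda>t. (c*t)^l / exp (c*t)) \<longlongrightarrow> 0) at_top"
    by (rule filterlim_compose[OF tendsto_power_div_exp_0])
       (use assms in real_asymp)
  then have "((\<lambda>t. (1 / c^l) * ((c*t)^l / exp (c*t))) \<longlongrightarrow> 0) at_top"
    by (intro tendsto_mult_right_zero)
  moreover have "(1 / c^l) * ((c*t)^l / exp (c*t)) = t^l * exp (-c*t)" for t
    using assms by (simp add: power_mult_distrib exp_minus field_simps)
  ultimately show ?thesis by simp
qed

lemma rC_lim:
  assumes "Re p > 0"
  shows "((\<lambda>t. rC a p l (of_real t)) \<longlongrightarrow> 0) at_top"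
proof -
  have "((\<lambda>t. (\<bar>a\<bar>^l / fact l) * (t^l * exp (- Re p * t))) \<longlongrightarrow> 0) at_top"
    by (intro tendsto_mult_right_zero pow_exp_lim assms)
  moreover have "\<forall>\<^sub>F t in at_top. norm (rC a p l (of_real t)) = (\<bar>a\<bar>^l / fact l) * (t^l * exp (- Re p * t))"
    using eventually_ge_at_top[of "0::real"]
  proof eventually_elim
    case (elim t)
    then show ?case unfolding rC_def
      by (simp add: norm_mult norm_divide norm_power norm_exp_eq_Re abs_mult power_mult_distrib)
  qed
  ultimately have "((\<lambda>t. norm (rC a p l (of_real t))) \<longlongrightarrow> 0) at_top"
    by (simp add: filterlim_cong tendsto_cong)
  then show ?thesis by (simp add: tendsto_norm_zero_iff)
qed

lemma RC_lim:
  assumes "Re p > 0"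
  shows "((\<lambda>t. RC a p l (of_real t)) \<longlongrightarrow> 0) at_top"
proof (induction l)
  case 0
  then show ?case using tendsto_minus[OF tendsto_divide_zero[OF rC_lim[OF assms, of a 0], of p]] by simp
next
  case (Suc l)
  moreover have "p \<noteq> 0" using assms by auto
  ultimately show ?case using rC_lim[OF assms, of a "Suc l"] by (auto intro!: tendsto_eq_intros)
qed

lemma geom_step:
  fixes s p a :: complex
  assumes "s \<noteq> 0" "p \<noteq> 0" "a = p - s"
  shows "a^(n+1) / (s * p^(n+1)) - (a/p)^(Suc n) / p = a^(Suc n+1) / (s * p^(Suc n+1))"
proof -
  have "a^(n+1) / (s * p^(n+1)) - (a/p)^(Suc n) / p = a^(n+1) * (p - s) / (s * p^(Suc n + 1))"
    using assms(1,2) by (simp add: field_simps power_divide)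
  also have "\<dots> = a^(Suc n+1) / (s * p^(Suc n+1))" using assms(3) by (simp add: mult_ac)
  finally show ?thesis .
qed

lemma geom_aux:
  fixes s :: complex and a :: complex
  assumes "s \<noteq> 0" "s + a \<noteq> 0"
  shows "1/s - (\<Sum>l\<le>n. (a/(s+a))^l / (s+a)) = a^(n+1) / (s * (s+a)^(n+1))"
proof (induction n)
  case 0
  then show ?case using assms by (simp add: field_simps)
next
  case (Suc n)
  have "1/s - (\<Sum>l\<le>Suc n. (a/(s+a))^l / (s+a)) = a^(n+1) / (s * (s+a)^(n+1)) - (a/(s+a))^(Suc n) / (s+a)"
    using Suc by simp
  also have "\<dots> = a^(Suc n+1) / (s * (s+a)^(Suc n+1))"
    by (rule geom_step) (use assms in auto)
  finally show ?case .
qed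

lemma rC_real:
  "rC a (s + of_real a) l (of_real t) = exp (-(s * of_real t)) * of_real (exp (-a*t) * (a*t)^l / fact l)"
proof -
  have "-((s + of_real a) * of_real t) = -(s * of_real t) + of_real (-a*t)" by (simp add: algebra_simps)
  then have "exp (-((s + of_real a) * of_real t)) = exp (-(s * of_real t)) * of_real (exp (-a*t))"
    by (simp only: exp_add exp_of_real)
  then show ?thesis unfolding rC_def by (simp add: mult_ac)
qed

lemma laplace_h:
  fixes a K :: real and s :: complex and n :: nat
  assumes a: "a > 0" and s: "Re s > 0"
  shows "((\<lambda>t. exp (-(s * of_real t)) * of_real (K * (1 - exp (-a*t) * (\<Sum>l\<le>n. (a*t)^l / fact l))))
     has_integral (of_real K * of_real a^(n+1) / (s * (s + of_real a)^(n+1)))) {0..}"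
proof -
  define p where "p = s + of_real a"
  have pRe: "Re p > 0" using a s by (simp add: p_def)
  have p0: "p \<noteq> 0" and s0: "s \<noteq> 0" using pRe s by auto
  define G where "G z = of_real K * (- exp (-(s*z)) / s - (\<Sum>l\<le>n. RC a p l z))" for z
  define G' where "G' z = of_real K * (exp (-(s*z)) - (\<Sum>l\<le>n. rC a p l z))" for z
  have dG: "(G has_field_derivative G' z) (at z)" for z
    unfolding G_def G'_def using s0 p0
    by (auto intro!: derivative_eq_intros DERIV_sum RC_deriv simp: field_simps)
  have eq: "exp (-(s * of_real t)) * of_real (K * (1 - exp (-a*t) * (\<Sum>l\<le>n. (a*t)^l / fact l)))
     = G' (of_real t)" for t
    unfolding G'_def p_def rC_real
    by (simp add: sum_distrib_left sum_divide_distrib algebra_simps)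
  have "((\<lambda>t. G' (of_real t)) has_integral (0 - G (of_real 0))) {0..}"
  proof (rule has_integral_at_top_lim)
    show "((\<lambda>t. G (of_real t)) has_vector_derivative G' (of_real x)) (at x)" for x
      by (rule has_vector_derivative_real_field[OF dG])
    have "((\<lambda>t. exp (-(s * of_real t))) \<longlongrightarrow> 0) at_top"
      using rC_lim[of "s" 0 0] s by (simp add: rC_def)
    then have "((\<lambda>t. - exp (-(s * of_real t)) / s) \<longlongrightarrow> 0) at_top"
      using tendsto_minus[OF tendsto_divide_zero] by fastforce
    moreover have "((\<lambda>t. \<Sum>l\<le>n. RC a p l (of_real t)) \<longlongrightarrow> 0) at_top"
      using RC_lim[OF pRe] by (intro tendsto_null_sum) auto
    ultimately have "((\<lambda>t. - exp (-(s * of_real t)) / s - (\<Sum>l\<le>n. RC a p l (of_real t))) \<longlongrightarrow> 0) at_top"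
      using tendsto_diff by fastforce
    then show "((\<lambda>t. G (of_real t)) \<longlongrightarrow> 0) at_top"
      unfolding G_def by (rule tendsto_mult_right_zero)
  qed
  moreover have "0 - G (of_real 0) = of_real K * of_real a^(n+1) / (s * (s + of_real a)^(n+1))"
  proof -
    have "0 - G (of_real 0) = of_real K * (1/s - (\<Sum>l\<le>n. (of_real a/p)^l / p))"
      unfolding G_def by (simp add: RC_0 sum_negf algebra_simps)
    also have "\<dots> = of_real K * (of_real a^(n+1) / (s * p^(n+1)))"
      using geom_aux[OF s0, of "of_real a"] p0 by (simp add: p_def)
    finally show ?thesis by (simp add: p_def)
  qed
  ultimately show ?thesis using eq by simp
qed

definition qf :: "real \<Rightarrow> nat \<Rightarrow> real \<Rightarrow> real" where
  "qf a l t = exp (-a*t) * (a*t)^l / fact l"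

lemma qf_deriv:
  "(qf a l has_real_derivative
     (if l = 0 then - a * qf a 0 t else a * qf a (l-1) t - a * qf a l t)) (at t)"
proof (cases l)
  case 0
  then show ?thesis unfolding qf_def
    by (auto intro!: derivative_eq_intros)
next
  case (Suc m)
  have "((\<lambda>t. exp (-a*t) * (a*t)^Suc m / fact (Suc m)) has_real_derivative
     (exp (-a*t) * (- a) * (a*t)^Suc m / fact (Suc m)
      + exp (-a*t) * (of_nat (Suc m) * (a*t)^m * a) / fact (Suc m))) (at t)"
    apply (rule derivative_eq_intros refl)+
    apply (simp_all del: fact_Suc add: field_simps)
    done
  moreover have "exp (-a*t) * (- a) * (a*t)^Suc m / fact (Suc m)
      + exp (-a*t) * (of_nat (Suc m) * (a*t)^m * a) / fact (Suc m)
     = a * qf a m t - a * qf a (Suc m) t"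
  proof -
    define c where "c = (1 + of_nat m :: real)"
    have e1: "(fact (Suc m)::real) = c * fact m" "(of_nat (Suc m)::real) = c" by (simp_all add: c_def)
    have e2: "c \<noteq> 0" unfolding c_def by simp
    have e3: "(fact m :: real) \<noteq> 0" by simp
    show ?thesis unfolding qf_def e1 using e2 e3 by (simp add: field_simps)
  qed
  ultimately show ?thesis using Suc unfolding qf_def by simp
qed

lemma Pf_deriv:
  "((\<lambda>t. \<Sum>l\<le>n. qf a l t) has_real_derivative - a * qf a n t) (at t)"
proof (induction n)
  case 0
  then show ?case using qf_deriv[of a 0 t] by simp
next
  case (Suc n)
  have "((\<lambda>t. (\<Sum>l\<le>n. qf a l t) + qf a (Suc n) t) has_real_derivative
      - a * qf a n t + (a * qf a n t - a * qf a (Suc n) t)) (at t)"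
    using DERIV_add[OF Suc qf_deriv[of a "Suc n" t]] by simp
  then show ?case by simp
qed

definition hf :: "real \<Rightarrow> real \<Rightarrow> nat \<Rightarrow> real \<Rightarrow> real" where
  "hf \<gamma> \<nu> n t = \<gamma>^n / (2*\<nu>)^(n+1) * (1 - exp (- 2 * \<nu> * t) * (\<Sum>l\<le>n. (2 * \<nu> * t) ^ l / fact l))"

lemma hf_qf: "hf \<gamma> \<nu> n t = \<gamma>^n / (2*\<nu>)^(n+1) * (1 - (\<Sum>l\<le>n. qf (2*\<nu>) l t))"
  unfolding hf_def qf_def by (simp add: sum_distrib_left mult.assoc)

lemma hf_0: "hf \<gamma> \<nu> n 0 = 0"
proof -
  have "(\<Sum>l\<le>n. (0::real)^l / fact l) = 1" by (induction n) auto
  then show ?thesis unfolding hf_def by simp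
qed

lemma hf_deriv:
  assumes "\<nu> > 0"
  shows "(hf \<gamma> \<nu> n has_real_derivative
     ((if n = 0 then 1 else \<gamma> * hf \<gamma> \<nu> (n-1) t) - 2*\<nu> * hf \<gamma> \<nu> n t)) (at t)"
proof -
  define a where "a = 2*\<nu>"
  have a: "a > 0" using assms by (simp add: a_def)
  have "((\<lambda>t. \<gamma>^n / a^(n+1) * (1 - (\<Sum>l\<le>n. qf a l t))) has_real_derivative
      \<gamma>^n / a^(n+1) * (0 - (- a * qf a n t))) (at t)"
    by (rule DERIV_cmult[OF DERIV_diff[OF DERIV_const Pf_deriv]])
  moreover have "\<gamma>^n / a^(n+1) * (0 - (- a * qf a n t))
      = (if n = 0 then 1 else \<gamma> * hf \<gamma> \<nu> (n-1) t) - 2*\<nu> * hf \<gamma> \<nu> n t"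
  proof (cases n)
    case 0
    then show ?thesis using a unfolding hf_qf a_def[symmetric] by (simp add: qf_def)
  next
    case (Suc m)
    have "(\<Sum>l\<le>n. qf a l t) = (\<Sum>l\<le>m. qf a l t) + qf a n t" using Suc by simp
    then show ?thesis using a Suc unfolding hf_qf a_def[symmetric]
      by (simp add: field_simps)
  qed
  ultimately show ?thesis unfolding hf_qf a_def[symmetric] by simp
qed

definition cc :: "nat \<Rightarrow> nat \<Rightarrow> real \<Rightarrow> nat \<Rightarrow> real" where
  "cc d b \<gamma> j = (if j = d then real b * \<gamma> else \<gamma>)"

lemma AQ_split:
  assumes "d \<ge> 1" "j \<le> d" "l \<le> d"
  shows "AQ d b \<gamma> \<nu> j l = (if l = j then - \<nu> else 0) + (if j \<noteq> 0 \<and> l = j - 1 then cc d b \<gamma> j else 0)"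
  using assms unfolding AQ_def cc_def by auto

lemma AQ_sum:
  assumes "d \<ge> 1" "j \<le> d"
  shows "(\<Sum>l\<le>d. AQ d b \<gamma> \<nu> j l * X l) = - \<nu> * X j + (if j = 0 then 0 else cc d b \<gamma> j * X (j-1))"
proof -
  have "(\<Sum>l\<le>d. AQ d b \<gamma> \<nu> j l * X l) =
     (\<Sum>l\<le>d. (if l = j then - \<nu> * X l else 0) + (if j \<noteq> 0 \<and> l = j - 1 then cc d b \<gamma> j * X l else 0))"
    using assms by (intro sum.cong refl) (auto simp: AQ_split)
  also have "\<dots> = - \<nu> * X j + (if j = 0 then 0 else cc d b \<gamma> j * X (j-1))"
    using assms by (simp add: sum.distrib)
  finally show ?thesis .
qed

lemma AQ_sum2:
  assumes "d \<ge> 1" "k \<le> d"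
  shows "(\<Sum>l\<le>d. X l * AQ d b \<gamma> \<nu> k l) = - \<nu> * X k + (if k = 0 then 0 else cc d b \<gamma> k * X (k-1))"
  using AQ_sum[OF assms, of b \<gamma> \<nu> X] by (simp add: mult.commute)

lemma ode_unique:
  fixes u :: "real \<Rightarrow> real"
  assumes "u 0 = 0" "\<And>t. t \<ge> 0 \<Longrightarrow> (u has_real_derivative (c * u t)) (at t within {0..})" "t \<ge> 0"
  shows "u t = 0"
proof -
  define v where "v t = exp (- c * t) * u t" for t
  have "(v has_real_derivative 0) (at x within {0..})" if "x \<in> {0..}" for x
  proof -
    have "(v has_real_derivative (exp (- c * x) * (- c) * u x + exp (- c * x) * (c * u x))) (at x within {0..})"
      unfolding v_def using assms(2)[of x] that
      by (auto intro!: derivative_eq_intros)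
    then show ?thesis by (simp add: algebra_simps)
  qed
  then obtain k where k: "\<And>x. x \<in> {0..} \<Longrightarrow> v x = k"
    using has_field_derivative_zero_constant[of "{0::real..}" v] by auto
  have "k = 0" using k[of 0] assms(1) by (simp add: v_def)
  then have "v t = 0" using k[of t] assms(3) by simp
  then show ?thesis by (simp add: v_def)
qed

definition beta :: "nat \<Rightarrow> nat \<Rightarrow> nat \<Rightarrow> real" where
  "beta d b j = (if j = d then real b else 1)"

definition mco :: "nat \<Rightarrow> nat \<Rightarrow> nat \<Rightarrow> nat \<Rightarrow> real" where
  "mco d b j k = real ((j+k) choose k) * beta d b j * beta d b k"

lemma choose_split:
  assumes "j + k \<ge> 1"
  shows "((j+k) choose k) = (if j = 0 then 0 else ((j-1+k) choose k)) + (if k = 0 then 0 else ((j+k-1) choose (k-1)))"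
proof (cases j)
  case 0
  then show ?thesis using assms by simp
next
  case (Suc j')
  show ?thesis
  proof (cases k)
    case 0
    then show ?thesis using Suc by simp
  next
    case (Suc k')
    have "j + k = Suc (j' + Suc k')" using \<open>j = Suc j'\<close> Suc by simp
    then show ?thesis using \<open>j = Suc j'\<close> Suc by (simp add: add.commute)
  qed
qed

lemma mco_rec:
  assumes "j \<le> d" "k \<le> d" "j + k \<ge> 1"
  shows "\<gamma> * mco d b j k = (if j = 0 then 0 else cc d b \<gamma> j * mco d b (j-1) k)
                         + (if k = 0 then 0 else cc d b \<gamma> k * mco d b j (k-1))"
proof -
  have b1: "j \<noteq> 0 \<Longrightarrow> beta d b (j-1) = 1" "k \<noteq> 0 \<Longrightarrow> beta d b (k-1) = 1"
    using assms by (auto simp: beta_def)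
  have c: "cc d b \<gamma> i = \<gamma> * beta d b i" for i by (simp add: cc_def beta_def)
  have "real ((j+k) choose k) = (if j = 0 then 0 else real ((j-1+k) choose k)) + (if k = 0 then 0 else real ((j+k-1) choose (k-1)))"
    using choose_split[OF assms(3)] by (simp split: if_splits)
  moreover have "j \<noteq> 0 \<Longrightarrow> j - 1 + k = j + k - 1" by simp
  ultimately show ?thesis unfolding mco_def c using b1
    by (auto simp: algebra_simps)
qed

lemma W_explicit:
  assumes d2: "d \<ge> 2" and nu: "\<nu> > 0" and sol: "solves_lyap d b \<gamma> \<nu> W"
  shows "j \<le> d \<Longrightarrow> k \<le> d \<Longrightarrow> t \<ge> 0 \<Longrightarrow> W t j k = mco d b j k * hf \<gamma> \<nu> (j+k) t"
proof (induction "j+k" arbitrary: j k t rule: less_induct)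
  case less
  note jd = less.prems(1) and kd = less.prems(2)
  define F where "F t = (if j=0 then 0 else cc d b \<gamma> j * (mco d b (j-1) k * hf \<gamma> \<nu> (j-1+k) t))
     + (if k=0 then 0 else cc d b \<gamma> k * (mco d b j (k-1) * hf \<gamma> \<nu> (j+(k-1)) t)) + BBT j k" for t
  have d1: "d \<ge> 1" using d2 by simp
  have W0: "W 0 j k = 0" using sol jd kd unfolding solves_lyap_def by blast
  have Wd: "((\<lambda>\<tau>. W \<tau> j k) has_real_derivative (-2*\<nu> * W t j k + F t)) (at t within {0..})"
    if t: "t \<ge> 0" for t
  proof -
    have D: "((\<lambda>\<tau>. W \<tau> j k) has_real_derivative
           ((\<Sum>l\<le>d. AQ d b \<gamma> \<nu> j l * W t l k) + (\<Sum>l\<le>d. W t j l * AQ d b \<gamma> \<nu> k l) + BBT j k))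
         (at t within {0..})"
      using sol t jd kd unfolding solves_lyap_def by blast
    have IH1: "j \<noteq> 0 \<Longrightarrow> W t (j-1) k = mco d b (j-1) k * hf \<gamma> \<nu> (j-1+k) t"
      using less.hyps[of "j-1" k t] jd kd t by simp
    have IH2: "k \<noteq> 0 \<Longrightarrow> W t j (k-1) = mco d b j (k-1) * hf \<gamma> \<nu> (j+(k-1)) t"
      using less.hyps[of j "k-1" t] jd kd t by simp
    have "(\<Sum>l\<le>d. AQ d b \<gamma> \<nu> j l * W t l k) + (\<Sum>l\<le>d. W t j l * AQ d b \<gamma> \<nu> k l) + BBT j k
        = -2*\<nu> * W t j k + F t"
      unfolding AQ_sum[OF d1 jd] AQ_sum2[OF d1 kd] F_def using IH1 IH2
      by (auto simp: algebra_simps)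
    then show ?thesis using D by simp
  qed
  have Ed: "((\<lambda>\<tau>. mco d b j k * hf \<gamma> \<nu> (j+k) \<tau>) has_real_derivative
        (-2*\<nu> * (mco d b j k * hf \<gamma> \<nu> (j+k) t) + F t)) (at t within {0..})" for t
  proof -
    have D: "((\<lambda>\<tau>. mco d b j k * hf \<gamma> \<nu> (j+k) \<tau>) has_real_derivative
        mco d b j k * ((if j+k = 0 then 1 else \<gamma> * hf \<gamma> \<nu> (j+k-1) t) - 2*\<nu> * hf \<gamma> \<nu> (j+k) t)) (at t within {0..})"
      by (rule has_field_derivative_at_within[OF DERIV_cmult[OF hf_deriv[OF nu]]])
    have "mco d b j k * (if j+k = 0 then 1 else \<gamma> * hf \<gamma> \<nu> (j+k-1) t) = F t"
    proof (cases "j + k = 0")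
      case True
      then show ?thesis using d2 by (simp add: F_def mco_def beta_def BBT_def)
    next
      case False
      have r: "\<gamma> * mco d b j k = (if j = 0 then 0 else cc d b \<gamma> j * mco d b (j-1) k)
                         + (if k = 0 then 0 else cc d b \<gamma> k * mco d b j (k-1))"
        using mco_rec[OF jd kd] False by simp
      have e1: "j \<noteq> 0 \<Longrightarrow> j - 1 + k = j + k - 1" "k \<noteq> 0 \<Longrightarrow> j + (k - 1) = j + k - 1" by auto
      have "mco d b j k * (\<gamma> * hf \<gamma> \<nu> (j+k-1) t) = (\<gamma> * mco d b j k) * hf \<gamma> \<nu> (j+k-1) t" by simp
      also have "\<dots> = F t" unfolding r F_def using False e1
        by (auto simp: BBT_def algebra_simps)
      finally show ?thesis using False by auto
    qed
    then show ?thesis using D by (simp add: algebra_simps)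
  qed
  define u where "u \<tau> = W \<tau> j k - mco d b j k * hf \<gamma> \<nu> (j+k) \<tau>" for \<tau>
  have u0: "u 0 = 0" using W0 by (simp add: hf_0 u_def)
  have ud: "(u has_real_derivative (-2*\<nu>) * u t) (at t within {0..})" if "t \<ge> 0" for t
    using DERIV_diff[OF Wd[OF that] Ed[of t]] unfolding u_def[abs_def] by (simp add: algebra_simps)
  have "u t = 0" by (rule ode_unique[of u, OF u0 ud]) (use less.prems in auto)
  then show ?case by (simp add: u_def)
qed

lemma laplace_W:
  assumes d2: "d \<ge> 2" and nu: "\<nu> > 0" and sol: "solves_lyap d b \<gamma> \<nu> W"
    and jd: "j \<le> d" and kd: "k \<le> d" and s: "Re s > 0"
  shows "laplace_is (\<lambda>t. W t j k) s
     (of_real (mco d b j k) * of_real \<gamma>^(j+k) / (s * (s + 2 * of_real \<nu>)^(j+k+1)))"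
proof -
  define n where "n = j + k"
  define K where "K = mco d b j k * (\<gamma>^n / (2*\<nu>)^(n+1))"
  have a: "2*\<nu> > 0" using nu by simp
  have L: "((\<lambda>t. exp (-(s * of_real t)) * of_real (K * (1 - exp (-(2*\<nu>)*t) * (\<Sum>l\<le>n. ((2*\<nu>)*t)^l / fact l))))
     has_integral (of_real K * of_real (2*\<nu>)^(n+1) / (s * (s + of_real (2*\<nu>))^(n+1)))) {0..}"
    by (rule laplace_h[OF a s])
  have eqf: "exp (-(s * of_real t)) * of_real (K * (1 - exp (-(2*\<nu>)*t) * (\<Sum>l\<le>n. ((2*\<nu>)*t)^l / fact l)))
      = exp (- (s * of_real t)) * of_real (W t j k)" if "t \<in> {0..}" for t
  proof -
    have "K * (1 - exp (-(2*\<nu>)*t) * (\<Sum>l\<le>n. ((2*\<nu>)*t)^l / fact l)) = W t j k"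
      using W_explicit[OF d2 nu sol jd kd, of t] that
      unfolding K_def hf_def n_def by simp
    then show ?thesis by simp
  qed
  have eqv: "of_real K * of_real (2*\<nu>)^(n+1) / (s * (s + of_real (2*\<nu>))^(n+1))
      = of_real (mco d b j k) * of_real \<gamma>^(j+k) / (s * (s + 2 * of_real \<nu>)^(j+k+1))"
  proof -
    have nz: "(of_real (2*\<nu>) :: complex)^(n+1) \<noteq> 0" using nu by simp
    have "of_real K * of_real (2*\<nu>)^(n+1) = (of_real (mco d b j k) * of_real \<gamma>^n :: complex)"
    proof -
      have "(of_real K :: complex) = of_real (mco d b j k) * (of_real \<gamma>^n / of_real (2*\<nu>)^(n+1))"
        unfolding K_def by simp
      then show ?thesis using nz by simp
    qed
    then show ?thesis unfolding n_def by simp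
  qed
  have L2: "((\<lambda>t. exp (- (s * of_real t)) * of_real (W t j k)) has_integral
      (of_real K * of_real (2*\<nu>)^(n+1) / (s * (s + of_real (2*\<nu>))^(n+1)))) {0..}"
    by (rule iffD1[OF has_integral_cong[OF eqf] L])
  show ?thesis unfolding laplace_is_def eqv[symmetric] by (rule L2)
qed

lemma V_eq:
  fixes s q g c m :: complex
  assumes "s \<noteq> 0" "q \<noteq> 0"
  shows "c / (s*q) * (g/q)^n * m = c * m * g^n / (s * q^(n+1))"
  using assms by (simp add: power_divide field_simps)

theorem mainTheorem3:
  fixes d b :: nat and \<gamma> \<nu> :: real and W :: "real \<Rightarrow> nat \<Rightarrow> nat \<Rightarrow> real"
  assumes "d \<ge> 2" and "b \<ge> 1" and "\<gamma> > 0" and "\<nu> > 0"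
    and "solves_lyap d b \<gamma> \<nu> W"
  shows
    "(\<forall>j<d. \<forall>k<d. \<forall>s. Re s > 0 \<longrightarrow>
        laplace_is (\<lambda>t. W t j k) s
          (1 / (s * (s + 2 * of_real \<nu>)) * (of_real \<gamma> / (s + 2 * of_real \<nu>)) ^ (j + k)
             * of_nat ((j + k) choose k)))
     \<and> (\<forall>j<d. \<forall>k<d. \<forall>t\<ge>0.
        W t j k = 1 / (2 * \<nu>) * (\<gamma> / (2 * \<nu>)) ^ (j + k) * real ((j + k) choose k)
          * (1 - exp (- 2 * \<nu> * t) * (\<Sum>l\<le>j + k. (2 * \<nu> * t) ^ l / fact l)))
     \<and> (\<forall>j<d. \<forall>s. Re s > 0 \<longrightarrow>
        laplace_is (\<lambda>t. W t d j) s
          (of_nat b / (s * (s + 2 * of_real \<nu>)) * (of_real \<gamma> / (s + 2 * of_real \<nu>)) ^ (d + j)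
             * of_nat ((d + j) choose d))
        \<and> laplace_is (\<lambda>t. W t j d) s
          (of_nat b / (s * (s + 2 * of_real \<nu>)) * (of_real \<gamma> / (s + 2 * of_real \<nu>)) ^ (d + j)
             * of_nat ((d + j) choose d)))
     \<and> (\<forall>s. Re s > 0 \<longrightarrow>
        laplace_is (\<lambda>t. W t d d) s
          ((of_nat b)\<^sup>2 / (s * (s + 2 * of_real \<nu>)) * (of_real \<gamma> / (s + 2 * of_real \<nu>)) ^ (2 * d)
             * of_nat ((2 * d) choose d)))"
proof (intro conjI allI impI)
  note d2 = assms(1) and nu = assms(4) and sol = assms(5)
  have nz: "s \<noteq> 0" "s + 2 * of_real \<nu> \<noteq> 0" if "Re s > 0" for s :: complex
  proof -
    have r: "Re (s + 2 * of_real \<nu>) > 0" using that nu by simp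
    show "s \<noteq> 0" using that by auto
    show "s + 2 * of_real \<nu> \<noteq> 0"
    proof
      assume e: "s + 2 * of_real \<nu> = 0"
      have "Re (s + 2 * of_real \<nu>) = 0" by (simp only: e zero_complex.sel)
      with r show False by linarith
    qed
  qed
  have mco1: "mco d b j k = real ((j+k) choose k)" if "j < d" "k < d" for j k
    using that by (simp add: mco_def beta_def)
  {
    fix j k :: nat and s :: complex
    assume j: "j < d" and k: "k < d" and s: "Re s > 0"
    show "laplace_is (\<lambda>t. W t j k) s
          (1 / (s * (s + 2 * of_real \<nu>)) * (of_real \<gamma> / (s + 2 * of_real \<nu>)) ^ (j + k)
             * of_nat ((j + k) choose k))"
      using laplace_W[OF d2 nu sol _ _ s, of j k] j k mco1[OF j k] V_eq[OF nz[OF s], of 1 "of_real \<gamma>" "j+k" "of_nat ((j + k) choose k)"]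
      by simp
  next
    fix j k :: nat and t :: real
    assume j: "j < d" and k: "k < d" and t: "t \<ge> 0"
    show "W t j k = 1 / (2 * \<nu>) * (\<gamma> / (2 * \<nu>)) ^ (j + k) * real ((j + k) choose k)
          * (1 - exp (- 2 * \<nu> * t) * (\<Sum>l\<le>j + k. (2 * \<nu> * t) ^ l / fact l))"
      using W_explicit[OF d2 nu sol, of j k t] j k t mco1[OF j k]
      by (simp add: hf_def power_divide)
  next
    fix j :: nat and s :: complex
    assume j: "j < d" and s: "Re s > 0"
    have C: "(d + j) choose j = (d + j) choose d" "j + d = d + j"
      using binomial_symmetric[of j "d+j"] by simp_all
    have m1: "mco d b d j = real ((d + j) choose d) * real b" using j C by (simp add: mco_def beta_def)
    have m2: "mco d b j d = real ((d + j) choose d) * real b" using j C by (simp add: mco_def beta_def add.commute)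
    show "laplace_is (\<lambda>t. W t d j) s
          (of_nat b / (s * (s + 2 * of_real \<nu>)) * (of_real \<gamma> / (s + 2 * of_real \<nu>)) ^ (d + j)
             * of_nat ((d + j) choose d))"
      using laplace_W[OF d2 nu sol _ _ s, of d j] j m1 V_eq[OF nz[OF s], of "of_nat b" "of_real \<gamma>" "d+j" "of_nat ((d + j) choose d)"]
      by (simp add: mult_ac)
    show "laplace_is (\<lambda>t. W t j d) s
          (of_nat b / (s * (s + 2 * of_real \<nu>)) * (of_real \<gamma> / (s + 2 * of_real \<nu>)) ^ (d + j)
             * of_nat ((d + j) choose d))"
      using laplace_W[OF d2 nu sol _ _ s, of j d] j m2 C(2) V_eq[OF nz[OF s], of "of_nat b" "of_real \<gamma>" "d+j" "of_nat ((d + j) choose d)"]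
      by (simp add: mult_ac)
  next
    fix s :: complex
    assume s: "Re s > 0"
    have m: "mco d b d d = real ((2*d) choose d) * (real b)\<^sup>2"
      by (simp add: mco_def beta_def mult_2 power2_eq_square)
    show "laplace_is (\<lambda>t. W t d d) s
          ((of_nat b)\<^sup>2 / (s * (s + 2 * of_real \<nu>)) * (of_real \<gamma> / (s + 2 * of_real \<nu>)) ^ (2 * d)
             * of_nat ((2 * d) choose d))"
      using laplace_W[OF d2 nu sol _ _ s, of d d] m V_eq[OF nz[OF s], of "(of_nat b)\<^sup>2" "of_real \<gamma>" "2*d" "of_nat ((2*d) choose d)"]
      by (simp add: mult_ac mult_2 mult_2_right[symmetric])
  }
qed

end
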